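(* Let $q$ be a prime power and $F/\mathbb{F}_q$ an algebraic function field with full constant field $\mathbb{F}_q$ of genus $g\geq 2$. For $n\geq 0$ let $A_n$ be the number of effective divisors of degree $n$ of $F$, for $r\geq 1$ let $B_r$ be the number of places of degree $r$ of $F$, let $\Sigma_1=\sum_{n=0}^{g-1}A_n$ and $\Delta_1=\{r:1\leq r\leq g-1,\ B_r\geq 1\}$. Then $$\Sigma_1\leq\prod_{r\in\Delta_1}\binom{B_r+\lfloor\frac{g-1}{r}\rfloor}{\lfloor\frac{g-1}{r}\rfloor}.$$ *)

theory Defs
  imports Complex_Main
begin

text \<open>An algebraic function field F/K is modelled as the whole type 'a (a field),
  together with a subfield K (a set of elements of 'a).\<close>

definition subfield_of :: "'a::field set \<Rightarrow> bool" where
  "subfield_of K \<longleftrightarrow> 0 \<in> K \<and> 1 \<in> K \<and>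
     (\<forall>x\<in>K. \<forall>y\<in>K. x + y \<in> K \<and> x * y \<in> K) \<and>
     (\<forall>x\<in>K. - x \<in> K \<and> inverse x \<in> K)"

definition algebraic_over :: "'a::field set \<Rightarrow> 'a \<Rightarrow> bool" where
  "algebraic_over K x \<longleftrightarrow> (\<exists>(c::nat \<Rightarrow> 'a) n. (\<forall>i. c i \<in> K) \<and> (\<exists>i\<le>n. c i \<noteq> 0) \<and>
      (\<Sum>i\<le>n. c i * x ^ i) = 0)"

definition rat_fun_field :: "'a::field set \<Rightarrow> 'a \<Rightarrow> 'a set" where
  "rat_fun_field K x = {(\<Sum>i\<le>n. a i * x ^ i) / (\<Sum>i\<le>n. b i * x ^ i) | n a b.
      (\<forall>i. a i \<in> K \<and> b i \<in> K) \<and> (\<Sum>i\<le>n. b i * x ^ i) \<noteq> 0}"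

definition finite_over :: "'a::field set \<Rightarrow> bool" where
  "finite_over E \<longleftrightarrow> (\<exists>B. finite B \<and>
      (\<forall>y. \<exists>c. (\<forall>b\<in>B. c b \<in> E) \<and> y = (\<Sum>b\<in>B. c b * b)))"

definition function_field :: "'a::field set \<Rightarrow> bool" where
  "function_field K \<longleftrightarrow> subfield_of K \<and>
     (\<exists>x. \<not> algebraic_over K x \<and> finite_over (rat_fun_field K x))"

definition full_constant_field :: "'a::field set \<Rightarrow> bool" where
  "full_constant_field K \<longleftrightarrow> (\<forall>x. algebraic_over K x \<longrightarrow> x \<in> K)"

definition valuation_ring :: "'a::field set \<Rightarrow> 'a set \<Rightarrow> bool" where
  "valuation_ring K V \<longleftrightarrow> K \<subset> V \<and> V \<noteq> UNIV \<and> 0 \<in> V \<and> 1 \<in> V \<and>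
     (\<forall>x\<in>V. \<forall>y\<in>V. x + y \<in> V \<and> x * y \<in> V \<and> - x \<in> V) \<and>
     (\<forall>z. z \<noteq> 0 \<longrightarrow> z \<in> V \<or> inverse z \<in> V)"

definition place :: "'a::field set \<Rightarrow> 'a set \<Rightarrow> bool" where
  "place K P \<longleftrightarrow> (\<exists>V. valuation_ring K V \<and> P = {z \<in> V. z = 0 \<or> inverse z \<notin> V})"

definition val_ring :: "'a::field set \<Rightarrow> 'a set" where
  "val_ring P = {z. \<forall>y\<in>P. z * y \<in> P}"

text \<open>Normalized discrete valuation v_P(z) for z \<noteq> 0: z = t^n u with t a prime
  element of P and u a unit of O_P.\<close>
definition val :: "'a::field set \<Rightarrow> 'a \<Rightarrow> int" where
  "val P z = (THE n::int. \<exists>t u. P = {t * y | y. y \<in> val_ring P} \<and>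
      u \<in> val_ring P \<and> inverse u \<in> val_ring P \<and> z = t powi n * u)"

text \<open>Linear independence over K modulo a set P (P = {0} gives plain independence).\<close>
definition indep_mod :: "'a::field set \<Rightarrow> 'a set \<Rightarrow> 'a set \<Rightarrow> bool" where
  "indep_mod K P S \<longleftrightarrow> (\<forall>c. (\<forall>s\<in>S. c s \<in> K) \<longrightarrow> (\<Sum>s\<in>S. c s * s) \<in> P \<longrightarrow> (\<forall>s\<in>S. c s = 0))"

text \<open>Degree of a place: the K-dimension of the residue class field O_P/P.\<close>
definition deg_place :: "'a::field set \<Rightarrow> 'a set \<Rightarrow> nat" where
  "deg_place K P = (GREATEST d. \<exists>S. finite S \<and> card S = d \<and> S \<subseteq> val_ring P \<and> indep_mod K P S)"

definition is_divisor :: "'a::field set \<Rightarrow> ('a set \<Rightarrow> int) \<Rightarrow> bool" where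
  "is_divisor K D \<longleftrightarrow> finite {P. D P \<noteq> 0} \<and> (\<forall>P. D P \<noteq> 0 \<longrightarrow> place K P)"

definition effective :: "('a set \<Rightarrow> int) \<Rightarrow> bool" where
  "effective D \<longleftrightarrow> (\<forall>P. D P \<ge> 0)"

definition deg_div :: "'a::field set \<Rightarrow> ('a set \<Rightarrow> int) \<Rightarrow> int" where
  "deg_div K D = (\<Sum>P\<in>{P. D P \<noteq> 0}. D P * int (deg_place K P))"

definition RR_space :: "'a::field set \<Rightarrow> ('a set \<Rightarrow> int) \<Rightarrow> 'a set" where
  "RR_space K A = {x. x = 0 \<or> (\<forall>P. place K P \<longrightarrow> val P x \<ge> - A P)}"

definition ell :: "'a::field set \<Rightarrow> ('a set \<Rightarrow> int) \<Rightarrow> nat" where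
  "ell K A = (GREATEST n. \<exists>S. finite S \<and> card S = n \<and> S \<subseteq> RR_space K A \<and> indep_mod K {0} S)"

definition genus :: "'a::field set \<Rightarrow> int" where
  "genus K = (GREATEST g. \<exists>A. is_divisor K A \<and> g = deg_div K A - int (ell K A) + 1)"

definition num_eff_divisors :: "'a::field set \<Rightarrow> nat \<Rightarrow> nat" where
  "num_eff_divisors K n = card {D. is_divisor K D \<and> effective D \<and> deg_div K D = int n}"

definition num_places :: "'a::field set \<Rightarrow> nat \<Rightarrow> nat" where
  "num_places K r = card {P. place K P \<and> deg_place K P = r}"

end

theory Submission
  imports Defs "HOL-Library.FuncSet"
begin


definition Sset :: "'b set \<Rightarrow> nat \<Rightarrow> ('b \<Rightarrow> nat) set" where
  "Sset A k = {f. (\<forall>x. x \<notin> A \<longrightarrow> f x = 0) \<and> sum f A \<le> k}"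

lemma rev_choose: "(\<Sum>j\<le>k. (n + (k - j)) choose (k - j)) = Suc (n + k) choose k"
proof -
  have "(\<Sum>j\<le>k. (n + (k - j)) choose (k - j)) = (\<Sum>i\<le>k. (n + i) choose i)"
    by (rule sum.reindex_bij_witness[of _ "\<lambda>i. k - i" "\<lambda>i. k - i"]) auto
  also have "\<dots> = Suc (n + k) choose k" by (rule sum_choose_lower)
  finally show ?thesis .
qed

lemma card_Sset: "finite A \<Longrightarrow> card (Sset A k) = (card A + k) choose k"
proof (induction A arbitrary: k rule: finite_induct)
  case empty
  have "Sset {} k = {\<lambda>_. 0}" by (auto simp: Sset_def)
  show ?case unfolding \<open>Sset {} k = {\<lambda>_. 0}\<close> by simp
next
  case (insert a A)
  have eq: "Sset (insert a A) k = (\<Union>j\<in>{..k}. (\<lambda>f. f(a:=j)) ` Sset A (k - j))"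
  proof
    show "Sset (insert a A) k \<subseteq> (\<Union>j\<in>{..k}. (\<lambda>f. f(a:=j)) ` Sset A (k - j))"
    proof
      fix f assume f: "f \<in> Sset (insert a A) k"
      have s: "sum f (insert a A) = f a + sum f A" using insert by simp
      have "sum (f(a:=0)) A = sum f A" using insert by (intro sum.cong) auto
      then have "f(a:=0) \<in> Sset A (k - f a)" using f s insert by (auto simp: Sset_def)
      moreover have "f = (f(a:=0))(a := f a)" by simp
      moreover have "f a \<le> k" using f s by (auto simp: Sset_def)
      ultimately show "f \<in> (\<Union>j\<in>{..k}. (\<lambda>f. f(a:=j)) ` Sset A (k - j))" by blast
    qed
  next
    show "(\<Union>j\<in>{..k}. (\<lambda>f. f(a:=j)) ` Sset A (k - j)) \<subseteq> Sset (insert a A) k"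
    proof
      fix f assume "f \<in> (\<Union>j\<in>{..k}. (\<lambda>f. f(a:=j)) ` Sset A (k - j))"
      then obtain j g where j: "j \<in> {..k}" and g: "g \<in> Sset A (k - j)" and fg: "f = g(a:=j)" by blast
      have "sum (g(a:=j)) A = sum g A" using insert by (intro sum.cong) auto
      then show "f \<in> Sset (insert a A) k" using insert g j fg by (auto simp: Sset_def)
    qed
  qed
  have fin: "finite (Sset A m)" for m
  proof -
    have "card (Sset A m) \<noteq> 0" using insert.IH by simp
    then show ?thesis by (metis card.infinite)
  qed
  have inj: "inj_on (\<lambda>f. f(a:=j)) (Sset A m)" for j m
  proof (rule inj_onI)
    fix f h
    assume fh: "f \<in> Sset A m" "h \<in> Sset A m" and e: "f(a:=j) = h(a:=j)"
    show "f = h"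
    proof
      fix x show "f x = h x"
      proof (cases "x = a")
        case True then show ?thesis using fh insert(2) by (simp add: Sset_def)
      next
        case False then show ?thesis using fun_cong[OF e, of x] by simp
      qed
    qed
  qed
  have "card (Sset (insert a A) k) = (\<Sum>j\<le>k. card ((\<lambda>f. f(a:=j)) ` Sset A (k - j)))"
    unfolding eq
  proof (rule card_UN_disjoint)
    show "\<forall>i\<in>{..k}. \<forall>j\<in>{..k}. i \<noteq> j \<longrightarrow> (\<lambda>f. f(a:=i)) ` Sset A (k - i) \<inter> (\<lambda>f. f(a:=j)) ` Sset A (k - j) = {}"
    proof (intro ballI impI equals0I)
      fix i j x assume ij: "i \<noteq> j" and "x \<in> (\<lambda>f. f(a:=i)) ` Sset A (k - i) \<inter> (\<lambda>f. f(a:=j)) ` Sset A (k - j)"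
      then obtain f h where x1: "x = f(a:=i)" and x2: "x = h(a:=j)" by blast
      have "x a = i" unfolding x1 by simp
      moreover have "x a = j" unfolding x2 by simp
      ultimately show False using ij by simp
    qed
    show "finite {..k}" by simp
    show "\<forall>j\<in>{..k}. finite ((\<lambda>f. f(a:=j)) ` Sset A (k - j))" using fin by blast
  qed
  also have "\<dots> = (\<Sum>j\<le>k. (card A + (k - j)) choose (k - j))"
    by (rule sum.cong[OF refl]) (simp only: card_image[OF inj] insert.IH)
  also have "\<dots> = Suc (card A + k) choose k" by (rule rev_choose)
  also have "\<dots> = (card (insert a A) + k) choose k" using insert by simp
  finally show ?case .
qed

lemma finite_Sset: "finite A \<Longrightarrow> finite (Sset A k)"
  using card_Sset[of A k] card.infinite by fastforce



definition divs :: "('b \<Rightarrow> bool) \<Rightarrow> ('b \<Rightarrow> nat) \<Rightarrow> nat \<Rightarrow> ('b \<Rightarrow> int) set" where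
  "divs pl dg n = {D. finite {P. D P \<noteq> 0} \<and> (\<forall>P. D P \<noteq> 0 \<longrightarrow> pl P) \<and> (\<forall>P. 0 \<le> D P) \<and>
      (\<Sum>P\<in>{P. D P \<noteq> 0}. D P * int (dg P)) = int n}"

lemma deg_superset:
  assumes "finite T" "{P. D P \<noteq> 0} \<subseteq> T"
  shows "(\<Sum>P\<in>{P. D P \<noteq> 0}. D P * int (dg P)) = (\<Sum>P\<in>T. D P * int (dg P))"
  by (rule sum.mono_neutral_left) (use assms in auto)

lemma deg_pos_place:
  assumes D: "D \<in> divs pl dg n" and fin: "finite (divs pl dg n)" and P: "D P \<noteq> 0"
  shows "dg P \<ge> 1"
proof (rule ccontr)
  assume "\<not> dg P \<ge> 1"
  then have d0: "dg P = 0" by simp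
  let ?f = "\<lambda>k::nat. D(P := D P + int k)"
  have pos: "D P > 0" using D P by (auto simp: divs_def less_le)
  have supp: "{Q. ?f k Q \<noteq> 0} = {Q. D Q \<noteq> 0}" for k using pos by auto
  have finS: "finite {Q. D Q \<noteq> 0}" and plD: "\<forall>Q. D Q \<noteq> 0 \<longrightarrow> pl Q" and nn: "\<forall>Q. 0 \<le> D Q"
    and dD: "(\<Sum>Q\<in>{Q. D Q \<noteq> 0}. D Q * int (dg Q)) = int n" using D by (auto simp: divs_def)
  have "?f k \<in> divs pl dg n" for k
  proof -
    have s: "(\<Sum>Q\<in>{Q. D Q \<noteq> 0}. ?f k Q * int (dg Q)) = (\<Sum>Q\<in>{Q. D Q \<noteq> 0}. D Q * int (dg Q))"
      by (rule sum.cong) (auto simp: d0)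
    show ?thesis unfolding divs_def mem_Collect_eq supp
    proof (intro conjI)
      show "\<forall>Q. ?f k Q \<noteq> 0 \<longrightarrow> pl Q" using plD P by auto
      show "\<forall>Q. 0 \<le> ?f k Q" using nn by auto
    qed (use finS s dD in auto)
  qed
  moreover have "inj ?f"
  proof (rule injI)
    fix x y assume "?f x = ?f y"
    then have "?f x P = ?f y P" by simp
    then show "x = y" by simp
  qed
  ultimately have "finite (UNIV :: nat set)"
    using fin by (metis finite_imageD finite_subset image_subsetI)
  then show False by simp
qed

lemma fin_class:
  assumes D: "D \<in> divs pl dg n" and fin: "finite (divs pl dg n)" and P: "D P \<noteq> 0"
  shows "finite {Q. pl Q \<and> dg Q = dg P}"
proof (rule ccontr)
  assume inf: "infinite {Q. pl Q \<and> dg Q = dg P}"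
  define f where "f = (\<lambda>P'. \<lambda>Q. D Q - (if Q = P then 1 else 0) + (if Q = P' then 1 else 0))"
  have pos: "D P > 0" using D P by (auto simp: divs_def less_le)
  have finS: "finite {Q. D Q \<noteq> 0}" and plD: "\<forall>Q. D Q \<noteq> 0 \<longrightarrow> pl Q" and nn: "\<forall>Q. 0 \<le> D Q"
    and dD: "(\<Sum>Q\<in>{Q. D Q \<noteq> 0}. D Q * int (dg Q)) = int n" using D by (auto simp: divs_def)
  have "f P' \<in> divs pl dg n" if P': "P' \<in> {Q. pl Q \<and> dg Q = dg P}" for P'
  proof -
    let ?T = "insert P' {Q. D Q \<noteq> 0}"
    have sub: "{Q. f P' Q \<noteq> 0} \<subseteq> ?T"
    proof
      fix Q assume Q: "Q \<in> {Q. f P' Q \<noteq> 0}"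
      show "Q \<in> ?T"
      proof (cases "Q = P' \<or> Q = P")
        case True then show ?thesis using P by auto
      next
        case False then have "f P' Q = D Q" by (simp add: f_def)
        then show ?thesis using Q by simp
      qed
    qed
    have finT: "finite ?T" using finS by simp
    have PT: "P \<in> ?T" using P by simp
    have pt: "\<And>Q. f P' Q * int (dg Q) = D Q * int (dg Q) - (if Q = P then int (dg Q) else 0) + (if Q = P' then int (dg Q) else 0)"
      by (simp add: f_def algebra_simps)
    have "(\<Sum>Q\<in>?T. f P' Q * int (dg Q)) =
       (\<Sum>Q\<in>?T. D Q * int (dg Q) - (if Q = P then int (dg Q) else 0) + (if Q = P' then int (dg Q) else 0))"
      by (simp only: pt)
    also have "\<dots> = (\<Sum>Q\<in>?T. D Q * int (dg Q))"
      using finT PT P' by (simp add: sum.distrib sum_subtractf sum.delta)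
    also have "\<dots> = int n" using dD deg_superset[OF finT, of D dg] by (metis subset_insertI)
    finally have dg': "(\<Sum>Q\<in>?T. f P' Q * int (dg Q)) = int n" .
    have "(\<Sum>Q\<in>{Q. f P' Q \<noteq> 0}. f P' Q * int (dg Q)) = int n"
      using deg_superset[OF finT sub] dg' by simp
    moreover have "finite {Q. f P' Q \<noteq> 0}" using finite_subset[OF sub finT] .
    moreover have "\<forall>Q. f P' Q \<noteq> 0 \<longrightarrow> pl Q" using sub plD P' by auto
    moreover have "\<forall>Q. 0 \<le> f P' Q" using nn pos by (auto simp: f_def)
    ultimately show ?thesis by (simp add: divs_def)
  qed
  moreover have "inj_on f {Q. pl Q \<and> dg Q = dg P}"
  proof (rule inj_onI)
    fix x y assume e: "f x = f y"
    show "x = y"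
    proof (rule ccontr)
      assume "x \<noteq> y"
      then show False using fun_cong[OF e, of x] by (simp add: f_def)
    qed
  qed
  ultimately have "f ` {Q. pl Q \<and> dg Q = dg P} \<subseteq> divs pl dg n" "inj_on f {Q. pl Q \<and> dg Q = dg P}"
    by blast+
  then have "finite {Q. pl Q \<and> dg Q = dg P}"
    using fin by (meson finite_imageD finite_subset)
  then show False using inf by simp
qed

lemma class_bound:
  assumes D: "D \<in> divs pl dg n" and r: "r \<ge> 1" and finC: "finite {Q. pl Q \<and> dg Q = r}"
  shows "(\<Sum>Q\<in>{Q. pl Q \<and> dg Q = r}. nat (D Q)) \<le> n div r"
proof -
  let ?C = "{Q. pl Q \<and> dg Q = r}"
  let ?S = "{Q. D Q \<noteq> 0}"
  have finS: "finite ?S" and nn: "\<forall>Q. 0 \<le> D Q"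
    and dD: "(\<Sum>Q\<in>?S. D Q * int (dg Q)) = int n" using D by (auto simp: divs_def)
  have "int ((\<Sum>Q\<in>?C. nat (D Q)) * r) = (\<Sum>Q\<in>?C. D Q * int (dg Q))"
    using nn by (simp add: sum_distrib_right of_nat_sum)
  also have "\<dots> = (\<Sum>Q\<in>?C \<inter> ?S. D Q * int (dg Q))"
    by (rule sum.mono_neutral_right) (use finC in auto)
  also have "\<dots> \<le> (\<Sum>Q\<in>?S. D Q * int (dg Q))"
    by (rule sum_mono2) (use finS nn in auto)
  finally have "(\<Sum>Q\<in>?C. nat (D Q)) * r \<le> n" using dD by linarith
  then show ?thesis using r by (simp add: less_eq_div_iff_mult_less_eq)
qed

lemma inR:
  assumes D: "D \<in> divs pl dg n" and fin: "finite (divs pl dg n)" and nN: "n \<le> N" and P: "D P \<noteq> 0"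
  shows "dg P \<in> {r. 1 \<le> r \<and> r \<le> N \<and> card {P. pl P \<and> dg P = r} \<ge> 1}"
proof -
  let ?r = "dg P"
  have r1: "?r \<ge> 1" by (rule deg_pos_place[OF D fin P])
  have fC: "finite {Q. pl Q \<and> dg Q = ?r}" by (rule fin_class[OF D fin P])
  have plP: "pl P" and nn: "D P \<ge> 0" using D P by (auto simp: divs_def)
  have PC: "P \<in> {Q. pl Q \<and> dg Q = ?r}" using plP by simp
  have "card {Q. pl Q \<and> dg Q = ?r} \<ge> 1" using fC PC
    by (metis One_nat_def Suc_leI card_gt_0_iff empty_iff)
  moreover have "?r \<le> N"
  proof -
    have "nat (D P) \<le> (\<Sum>Q\<in>{Q. pl Q \<and> dg Q = ?r}. nat (D Q))"
      by (rule member_le_sum) (use fC PC in auto)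
    also have "\<dots> \<le> n div ?r" by (rule class_bound[OF D r1 fC])
    finally have "1 \<le> n div ?r" using P nn by linarith
    then have "?r \<le> n" by (metis div_less not_le not_one_le_zero)
    then show ?thesis using nN by simp
  qed
  ultimately show ?thesis using r1 by simp
qed

lemma main_abs:
  fixes pl :: "'b \<Rightarrow> bool" and dg :: "'b \<Rightarrow> nat" and N :: nat
  shows "(\<Sum>n\<le>N. card (divs pl dg n)) \<le> (\<Prod>r\<in>{r. 1 \<le> r \<and> r \<le> N \<and> card {P. pl P \<and> dg P = r} \<ge> 1}.
            (card {P. pl P \<and> dg P = r} + N div r) choose (N div r))"
proof -
  define C where "C r = {P. pl P \<and> dg P = r}" for r
  define R where "R = {r. 1 \<le> r \<and> r \<le> N \<and> card {P. pl P \<and> dg P = r} \<ge> 1}"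
  define I where "I = {n. n \<le> N \<and> finite (divs pl dg n)}"
  define U where "U = (\<Union>n\<in>I. divs pl dg n)"
  define \<phi> where "\<phi> D = (\<lambda>r\<in>R. \<lambda>P. if P \<in> C r then nat (D P) else 0)" for D :: "'b \<Rightarrow> int"
  have finR: "finite R" by (rule finite_subset[of _ "{..N}"]) (auto simp: R_def)
  have RC: "finite (C r)" "r \<ge> 1" if "r \<in> R" for r
    using that by (auto simp: R_def C_def intro: card_ge_0_finite)
  have finI: "finite I" by (rule finite_subset[of _ "{..N}"]) (auto simp: I_def)
  have "(\<Sum>n\<le>N. card (divs pl dg n)) = (\<Sum>n\<in>I. card (divs pl dg n))"
  proof (rule sum.mono_neutral_right)
    show "I \<subseteq> {..N}" by (auto simp: I_def)
    show "\<forall>i\<in>{..N} - I. card (divs pl dg i) = 0" by (auto simp: I_def)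
  qed simp
  also have "\<dots> = card U" unfolding U_def
  proof (rule card_UN_disjoint[symmetric])
    show "\<forall>i\<in>I. \<forall>j\<in>I. i \<noteq> j \<longrightarrow> divs pl dg i \<inter> divs pl dg j = {}"
      by (auto simp: divs_def)
  qed (use finI in \<open>auto simp: I_def\<close>)
  also have "\<dots> \<le> card (PiE R (\<lambda>r. Sset (C r) (N div r)))"
  proof (rule card_inj_on_le)
    show "finite (PiE R (\<lambda>r. Sset (C r) (N div r)))"
      using finR RC finite_Sset by (intro finite_PiE) auto
    show "\<phi> ` U \<subseteq> PiE R (\<lambda>r. Sset (C r) (N div r))"
    proof
      fix y assume "y \<in> \<phi> ` U"
      then obtain D n where n: "n \<in> I" and D: "D \<in> divs pl dg n" and yD: "y = \<phi> D"
        by (auto simp: U_def)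
      show "y \<in> PiE R (\<lambda>r. Sset (C r) (N div r))" unfolding yD
      proof (rule PiE_I)
        fix r assume r: "r \<in> R"
        have "(\<Sum>P\<in>C r. if P \<in> C r then nat (D P) else 0) = (\<Sum>P\<in>C r. nat (D P))"
          by (rule sum.cong) auto
        also have "\<dots> \<le> n div r" unfolding C_def by (rule class_bound[OF D]) (use RC[OF r] in \<open>auto simp: C_def\<close>)
        also have "\<dots> \<le> N div r" using n by (auto simp: I_def intro: div_le_mono)
        finally show "\<phi> D r \<in> Sset (C r) (N div r)" using r by (auto simp: \<phi>_def Sset_def)
      next
        fix r assume "r \<notin> R" then show "\<phi> D r = undefined" by (simp add: \<phi>_def)
      qed
    qed
    show "inj_on \<phi> U"
    proof (rule inj_onI)
      fix D1 D2 assume D1: "D1 \<in> U" and D2: "D2 \<in> U" and e: "\<phi> D1 = \<phi> D2"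
      obtain n1 where n1: "n1 \<in> I" "D1 \<in> divs pl dg n1" using D1 by (auto simp: U_def)
      obtain n2 where n2: "n2 \<in> I" "D2 \<in> divs pl dg n2" using D2 by (auto simp: U_def)
      have nn1: "\<forall>P. D1 P \<ge> 0" and nn2: "\<forall>P. D2 P \<ge> 0" and pl1: "\<forall>P. D1 P \<noteq> 0 \<longrightarrow> pl P"
        and pl2: "\<forall>P. D2 P \<noteq> 0 \<longrightarrow> pl P" using n1 n2 by (auto simp: divs_def)
      have key: "D1 P = D2 P" if "dg P \<in> R" "pl P" for P
      proof -
        have "\<phi> D1 (dg P) P = \<phi> D2 (dg P) P" using e by simp
        then have "nat (D1 P) = nat (D2 P)" using that by (simp add: \<phi>_def C_def)
        then show ?thesis using nn1 nn2 by (metis int_nat_eq)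
      qed
      show "D1 = D2"
      proof
        fix P
        show "D1 P = D2 P"
        proof (cases "D1 P \<noteq> 0")
          case True
          have "dg P \<in> R" unfolding R_def
            by (rule inR[OF n1(2) _ _ True]) (use n1(1) in \<open>auto simp: I_def\<close>)
          then show ?thesis using key pl1 True by blast
        next
          case False
          show ?thesis
          proof (cases "D2 P \<noteq> 0")
            case True
            have "dg P \<in> R" unfolding R_def
              by (rule inR[OF n2(2) _ _ True]) (use n2(1) in \<open>auto simp: I_def\<close>)
            then show ?thesis using key pl2 True by blast
          next
            case False2: False
            then show ?thesis using False by simp
          qed
        qed
      qed
    qed
  qed
  also have "\<dots> = (\<Prod>r\<in>R. card (Sset (C r) (N div r)))" using finR by (rule card_PiE)
  also have "\<dots> = (\<Prod>r\<in>R. (card (C r) + N div r) choose (N div r))"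
    by (rule prod.cong) (use RC card_Sset in auto)
  finally show ?thesis by (simp add: R_def C_def)
qed


lemma divs_eq: "{D. is_divisor K D \<and> effective D \<and> deg_div K D = int n} = divs (place K) (deg_place K) n"
  by (auto simp: is_divisor_def effective_def deg_div_def divs_def)

theorem theorem3p6:
  fixes K :: "'a::field set" and q g :: nat
  assumes "function_field K" and "full_constant_field K"
    and "finite K" and "card K = q"
    and "genus K = int g" and "g \<ge> 2"
  shows "(\<Sum>n\<le>g - 1. num_eff_divisors K n)
     \<le> (\<Prod>r\<in>{r. 1 \<le> r \<and> r \<le> g - 1 \<and> num_places K r \<ge> 1}.
          (num_places K r + (g - 1) div r) choose ((g - 1) div r))"
  unfolding num_eff_divisors_def num_places_def divs_eq
  by (rule main_abs)

end
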